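(* Let $q\ge 3$ be a prime power and $k$ a positive integer. Then there exists an $[n,k]_q$ MWS code for some positive integer $n$.
   Context: An $[n,k]_q$ code is a $k$-dimensional $\mathbb{F}_q$-linear subspace $\mathcal{C}$ of $\mathbb{F}_q^n$ with the Hamming weight $w(c)=|\{i: c_i\neq 0\}|$. Standing convention: codes of dimension $k\ge 2$ are non-degenerate, i.e. no coordinate position is identically zero on $\mathcal{C}$. The weight set is $w(\mathcal{C})=\{w(c): c\in\mathcal{C}\setminus\{0\}\}$, and $\theta_q(k-1)=\frac{q^k-1}{q-1}$. $\mathcal{C}$ is a maximum weight spectrum (MWS) code if $|w(\mathcal{C})|=\theta_q(k-1)$. *)

theory Defs
  imports Main "HOL.Vector_Spaces" "HOL-Library.Function_Algebras"
begin

text \<open>Vectors of F_q^n are represented as functions nat => 'a vanishing outside {0..<n};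
  the field F_q is a finite field type 'a with CARD('a) = q.\<close>

definition vscale :: "'a::field \<Rightarrow> (nat \<Rightarrow> 'a) \<Rightarrow> (nat \<Rightarrow> 'a)" where
  "vscale c v = (\<lambda>i. c * v i)"

definition ambient :: "nat \<Rightarrow> (nat \<Rightarrow> 'a::zero) set" where
  "ambient n = {v. \<forall>i\<ge>n. v i = 0}"

definition hweight :: "nat \<Rightarrow> (nat \<Rightarrow> 'a::zero) \<Rightarrow> nat" where
  "hweight n v = card {i. i < n \<and> v i \<noteq> 0}"

text \<open>An [n,k]_q code: k-dimensional linear subspace of F_q^n; for k >= 2 it is
  required to be non-degenerate (standing convention).\<close>
definition is_code :: "nat \<Rightarrow> nat \<Rightarrow> (nat \<Rightarrow> 'a::field) set \<Rightarrow> bool" where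
  "is_code n k C \<longleftrightarrow> C \<subseteq> ambient n \<and> module.subspace vscale C
     \<and> vector_space.dim vscale C = k
     \<and> (k \<ge> 2 \<longrightarrow> (\<forall>i<n. \<exists>c\<in>C. c i \<noteq> 0))"

definition weight_set :: "nat \<Rightarrow> (nat \<Rightarrow> 'a::zero) set \<Rightarrow> nat set" where
  "weight_set n C = hweight n ` (C - {0})"

definition theta :: "nat \<Rightarrow> nat \<Rightarrow> nat" where
  "theta q m = (q ^ (m + 1) - 1) div (q - 1)"

definition is_MWS :: "nat \<Rightarrow> nat \<Rightarrow> (nat \<Rightarrow> 'a::{field,finite}) set \<Rightarrow> bool" where
  "is_MWS n k C \<longleftrightarrow> is_code n k C \<and> card (weight_set n C) = theta (card (UNIV :: 'a set)) (k - 1)"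

end

theory Submission
  imports Defs "HOL-Library.Discrete_Functions" "HOL-Library.FuncSet"
begin

lemma vs: "vector_space (vscale :: 'a::field \<Rightarrow> (nat \<Rightarrow> 'a) \<Rightarrow> _)"
  by unfold_locales (auto simp: vscale_def fun_eq_iff algebra_simps)

lemma ambient_eq: "ambient k = (\<lambda>f i. if i < k then f i else (0::'a::zero)) ` (PiE {..<k} (\<lambda>_. UNIV))"
proof -
  have "v \<in> (\<lambda>f i. if i < k then f i else 0) ` (PiE {..<k} (\<lambda>_. UNIV))" if "v \<in> ambient k" for v :: "nat \<Rightarrow> 'a"
    apply (rule image_eqI[where x="restrict v {..<k}"])
    using that by (auto simp: ambient_def fun_eq_iff)
  then show ?thesis by (auto simp: ambient_def)
qed

lemma card_ambient: "finite (ambient k :: (nat \<Rightarrow> 'a::{zero,finite}) set) \<and> card (ambient k :: (nat \<Rightarrow> 'a) set) = card (UNIV :: 'a set) ^ k"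
proof -
  have inj: "inj_on (\<lambda>f i. if i < k then f i else (0::'a)) (PiE {..<k} (\<lambda>_. UNIV))"
    by (auto simp: inj_on_def fun_eq_iff PiE_def extensional_def) (metis)
  show ?thesis unfolding ambient_eq
    using card_image[OF inj] by (simp add: card_PiE finite_PiE)
qed

lemma sum_pow2_lt: "S \<subseteq> {..<m} \<Longrightarrow> (\<Sum>j\<in>S. 2^j::nat) < 2^m"
proof (induction m arbitrary: S)
  case 0
  then show ?case by simp
next
  case (Suc m)
  have fin: "finite S" using Suc.prems finite_subset by blast
  show ?case
  proof (cases "m \<in> S")
    case True
    have "S - {m} \<subseteq> {..<m}" using Suc.prems by auto
    from Suc.IH[OF this] have "(\<Sum>j\<in>S - {m}. 2^j::nat) < 2^m" .
    moreover have "(\<Sum>j\<in>S. 2^j::nat) = 2^m + (\<Sum>j\<in>S - {m}. 2^j)"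
      using True fin by (simp add: sum.remove)
    ultimately show ?thesis by simp
  next
    case False
    then have "S \<subseteq> {..<m}" using Suc.prems by (force simp: less_Suc_eq)
    from Suc.IH[OF this] show ?thesis by simp
  qed
qed

lemma sum_binary_inj_aux:
  "S \<subseteq> {..<N} \<Longrightarrow> T \<subseteq> {..<N} \<Longrightarrow> (\<Sum>j\<in>S. 2^j :: nat) = (\<Sum>j\<in>T. 2^j) \<Longrightarrow> S = T"
proof (induction N arbitrary: S T)
  case 0
  then show ?case by simp
next
  case (Suc N)
  have finS: "finite S" using Suc.prems finite_subset by blast
  have finT: "finite T" using Suc.prems finite_subset by blast
  have S': "S - {N} \<subseteq> {..<N}" and T': "T - {N} \<subseteq> {..<N}" using Suc.prems by auto
  have eS: "(\<Sum>j\<in>S. 2^j::nat) = (if N \<in> S then 2^N else 0) + (\<Sum>j\<in>S - {N}. 2^j)"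
    using finS by (auto simp: sum.remove)
  have eT: "(\<Sum>j\<in>T. 2^j::nat) = (if N \<in> T then 2^N else 0) + (\<Sum>j\<in>T - {N}. 2^j)"
    using finT by (auto simp: sum.remove)
  have lS: "(\<Sum>j\<in>S - {N}. 2^j::nat) < 2^N" using sum_pow2_lt[OF S'] .
  have lT: "(\<Sum>j\<in>T - {N}. 2^j::nat) < 2^N" using sum_pow2_lt[OF T'] .
  have mem: "N \<in> S \<longleftrightarrow> N \<in> T"
  proof -
    have a: False if "N \<in> S" "N \<notin> T"
      and eS: "(\<Sum>j\<in>S. 2^j::nat) = (if N \<in> S then 2^N else 0) + (\<Sum>j\<in>S - {N}. 2^j)"
      and eT: "(\<Sum>j\<in>T. 2^j::nat) = (if N \<in> T then 2^N else 0) + (\<Sum>j\<in>T - {N}. 2^j)"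
      and lT: "(\<Sum>j\<in>T - {N}. 2^j::nat) < 2^N" and eq: "(\<Sum>j\<in>S. 2^j :: nat) = (\<Sum>j\<in>T. 2^j)" for S T :: "nat set"
    proof -
      have "(\<Sum>j\<in>S. 2^j::nat) = 2^N + (\<Sum>j\<in>S - {N}. 2^j)" using eS that(1) by simp
      moreover have "(\<Sum>j\<in>T. 2^j::nat) = (\<Sum>j\<in>T - {N}. 2^j)" using eT that(2) by simp
      ultimately show False using eq lT by linarith
    qed
    show ?thesis using a[OF _ _ eS eT lT Suc.prems(3)] a[OF _ _ eT eS lS Suc.prems(3)[symmetric]] by blast
  qed
  then have "(\<Sum>j\<in>S - {N}. 2^j::nat) = (\<Sum>j\<in>T - {N}. 2^j)"
    using Suc.prems(3) eS eT by auto
  from Suc.IH[OF S' T' this] mem show ?case by blast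
qed

lemma sum_binary_inj:
  assumes "finite S" "finite T" "(\<Sum>j\<in>S. 2^j :: nat) = (\<Sum>j\<in>T. 2^j)" shows "S = T"
proof -
  obtain N where "S \<union> T \<subseteq> {..<N}" using assms(1,2)
    using finite_nat_set_iff_bounded[of "S \<union> T"] by auto
  then show ?thesis using sum_binary_inj_aux[OF _ _ assms(3)] by auto
qed

lemma fl_bound: "p < 2^N - 1 \<Longrightarrow> floor_log (Suc p) < N"
proof -
  assume "p < 2^N - 1"
  have "2 ^ floor_log (Suc p) \<le> Suc p" by (rule floor_log_exp2_le) simp
  also have "\<dots> < 2^N" using \<open>p < 2^N - 1\<close> by simp
  finally show ?thesis by (simp add: power_strict_increasing_iff)
qed

lemma block_eq: "j < N \<Longrightarrow> {p::nat. p < 2^N - 1 \<and> floor_log (Suc p) = j} = {2^j - 1 ..< 2^Suc j - 1}"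
proof (intro set_eqI iffI)
  fix p :: nat assume j: "j < N" and p: "p \<in> {p. p < 2^N - 1 \<and> floor_log (Suc p) = j}"
  then have "2 ^ j \<le> Suc p" using floor_log_exp2_le[of "Suc p"] by auto
  moreover have "Suc p < 2 * 2^j" using floor_log_exp2_gt[of "Suc p"] p by auto
  ultimately show "p \<in> {2^j - 1 ..< 2^Suc j - 1}" by auto
next
  fix p :: nat assume j: "j < N" and p: "p \<in> {2^j - 1 ..< 2^Suc j - 1}"
  have h1: "(1::nat) \<le> 2^j" by simp
  have "2 ^ j \<le> Suc p" "Suc p < 2 * 2^j" using p h1 by auto
  then have "floor_log (Suc p) = j" by (intro floor_log_eqI) auto
  moreover have "(2::nat)^Suc j \<le> 2^N" using j by (intro power_increasing) auto
  ultimately show "p \<in> {p. p < 2^N - 1 \<and> floor_log (Suc p) = j}" using p by auto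
qed

lemma block_card: "j < N \<Longrightarrow> card {p. p < 2^N - 1 \<and> floor_log (Suc p) = j} = 2^j"
proof -
  assume j: "j < N"
  have h1: "(1::nat) \<le> 2^j" by simp
  have "card {2^j - 1 ..< 2^Suc j - 1 :: nat} = 2^j" using h1 by simp
  then show ?thesis using block_eq[OF j] by simp
qed

lemma hweight_blocks:
  fixes h :: "nat \<Rightarrow> 'a::zero"
  shows "hweight (2^N - 1) (\<lambda>p. if p < 2^N - 1 then h (floor_log (Suc p)) else 0)
    = (\<Sum>j\<in>{j. j < N \<and> h j \<noteq> 0}. 2^j)"
proof -
  let ?n = "2^N - 1 :: nat"
  let ?B = "\<lambda>j. {p. p < ?n \<and> floor_log (Suc p) = j}"
  let ?J = "{j. j < N \<and> h j \<noteq> 0}"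
  have "{i. i < ?n \<and> (if i < ?n then h (floor_log (Suc i)) else 0) \<noteq> 0} = (\<Union>j\<in>?J. ?B j)"
    using fl_bound by auto
  then have "hweight ?n (\<lambda>p. if p < ?n then h (floor_log (Suc p)) else 0) = card (\<Union>j\<in>?J. ?B j)"
    by (simp add: hweight_def)
  also have "\<dots> = (\<Sum>j\<in>?J. card (?B j))"
    by (rule card_UN_disjoint) auto
  also have "\<dots> = (\<Sum>j\<in>?J. 2^j)"
    by (rule sum.cong[OF refl], rule block_card) simp
  finally show ?thesis .
qed

lemma sum_fun_apply: "(\<Sum>i\<in>A. f i) p = (\<Sum>i\<in>A. f i p)"
  by (induction A rule: infinite_finite_induct) auto

definition dotp :: "nat \<Rightarrow> (nat \<Rightarrow> 'a::field) \<Rightarrow> (nat \<Rightarrow> 'a) \<Rightarrow> 'a" where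
  "dotp k u v = (\<Sum>i<k. u i * v i)"

definition unitv :: "nat \<Rightarrow> nat \<Rightarrow> 'a::field" where
  "unitv j = (\<lambda>i. if i = j then 1 else 0)"

lemma dotp_add1: "dotp k (u + w) v = dotp k u v + dotp k w v"
  by (simp add: dotp_def sum.distrib distrib_right)

lemma dotp_scale1: "dotp k (vscale a u) v = a * dotp k u v"
  by (simp add: dotp_def vscale_def sum_distrib_left mult.assoc)

lemma dotp_zero1: "dotp k 0 v = 0"
  by (simp add: dotp_def)

lemma dotp_zero2: "dotp k u 0 = 0"
  by (simp add: dotp_def)

lemma dotp_unit1: "j < k \<Longrightarrow> dotp k (unitv j) v = v j"
proof -
  assume j: "j < k"
  have "dotp k (unitv j) v = (\<Sum>i<k. if i = j then v j else 0)"
    unfolding dotp_def by (rule sum.cong) (auto simp: unitv_def)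
  then show ?thesis using j by simp
qed

lemma dotp_unit2: "j < k \<Longrightarrow> dotp k u (unitv j) = u j"
proof -
  assume j: "j < k"
  have "dotp k u (unitv j) = (\<Sum>i<k. if i = j then u j else 0)"
    unfolding dotp_def by (rule sum.cong) (auto simp: unitv_def)
  then show ?thesis using j by simp
qed

lemma unitv_ambient: "j < k \<Longrightarrow> unitv j \<in> ambient k"
  by (simp add: unitv_def ambient_def)

lemma unitv_nz: "unitv j \<noteq> 0"
  by (simp add: unitv_def fun_eq_iff)

lemma ambient_nz: "u \<in> ambient k \<Longrightarrow> u \<noteq> 0 \<Longrightarrow> \<exists>i<k. u i \<noteq> 0"
  by (auto simp: ambient_def fun_eq_iff) (metis not_le)

lemma proportional:
  fixes u w :: "nat \<Rightarrow> 'a::field"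
  assumes u: "u \<in> ambient k" "u \<noteq> 0" and w: "w \<in> ambient k"
    and eq: "\<And>v. v \<in> ambient k \<Longrightarrow> dotp k u v = 0 \<longleftrightarrow> dotp k w v = 0"
  shows "\<exists>a. w = vscale a u"
proof -
  obtain i where i: "i < k" "u i \<noteq> 0" using ambient_nz[OF u] by blast
  have "w j = (w i / u i) * u j" for j
  proof (cases "j < k")
    case False
    then show ?thesis using u w by (simp add: ambient_def)
  next
    case True
    show ?thesis
    proof (cases "j = i")
      case True then show ?thesis using i by simp
    next
      case False
      define v where "v = (\<lambda>l. (if l = j then u i else 0) + (if l = i then - u j else (0::'a)))"
      have vA: "v \<in> ambient k" using i \<open>j < k\<close> by (auto simp: v_def ambient_def)
      have d: "dotp k x v = x j * u i - x i * u j" for x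
      proof -
        have "dotp k x v = (\<Sum>l<k. (if l = j then x j * u i else 0) + (if l = i then - (x i * u j) else 0))"
          unfolding dotp_def by (rule sum.cong) (auto simp: v_def \<open>j \<noteq> i\<close>)
        also have "\<dots> = x j * u i - x i * u j"
          using i \<open>j < k\<close> by (simp add: sum.distrib)
        finally show ?thesis .
      qed
      have "dotp k u v = 0" by (simp add: d)
      then have "dotp k w v = 0" using eq[OF vA] by simp
      then have "w j * u i = w i * u j" by (simp add: d)
      then have "w j * u i / u i = w i * u j / u i" by simp
      then show ?thesis using i by simp
    qed
  qed
  then have "w = (\<lambda>j. (w i / u i) * u j)" by (intro ext)
  then show ?thesis unfolding vscale_def by blast
qed

locale mws =
  fixes k N :: nat and g :: "nat \<Rightarrow> nat \<Rightarrow> 'a::{field,finite}"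
  assumes gbij: "bij_betw g {..<N} (ambient k - {0})"
begin

definition n :: nat where "n = 2^N - 1"
definition cw where "cw u = (\<lambda>p. if p < n then dotp k u (g (floor_log (Suc p))) else 0)"
definition C where "C = cw ` ambient k"

lemma g_in: "j < N \<Longrightarrow> g j \<in> ambient k \<and> g j \<noteq> 0"
  using gbij by (auto simp: bij_betw_def)

lemma g_surj: "v \<in> ambient k \<Longrightarrow> v \<noteq> 0 \<Longrightarrow> \<exists>j<N. g j = v"
proof -
  assume "v \<in> ambient k" "v \<noteq> 0"
  then have "v \<in> g ` {..<N}" using gbij by (auto simp: bij_betw_def)
  then show ?thesis by auto
qed

lemma pos_of: "j < N \<Longrightarrow> 2^j - 1 < n \<and> floor_log (Suc (2^j - 1)) = j"
proof -
  assume j: "j < N"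
  have "(2::nat)^j < 2^N" using j by (simp add: power_strict_increasing_iff)
  moreover have "(1::nat) \<le> 2^j" by simp
  ultimately have "2^j - 1 < n" unfolding n_def by arith
  then show ?thesis using \<open>1 \<le> 2^j\<close> by simp
qed

lemma cw_at: "j < N \<Longrightarrow> cw u (2^j - 1) = dotp k u (g j)"
  using pos_of by (simp add: cw_def)

lemma cw_add: "cw (u + w) = cw u + cw w"
  by (simp add: cw_def fun_eq_iff dotp_add1)

lemma cw_scale: "cw (vscale a u) = vscale a (cw u)"
  by (simp add: cw_def fun_eq_iff dotp_scale1[unfolded vscale_def] vscale_def)

lemma cw_zero: "cw 0 = 0"
  by (simp add: cw_def fun_eq_iff dotp_zero1)

lemma cw_coord: "u \<in> ambient k \<Longrightarrow> i < k \<Longrightarrow> \<exists>p. cw u p = u i \<and> (\<forall>w. cw w p = w i)"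
proof -
  assume i: "i < k"
  obtain j where j: "j < N" "g j = unitv i"
    using g_surj[OF unitv_ambient[OF i] unitv_nz] by blast
  show ?thesis using cw_at[OF j(1)] j(2) dotp_unit2[OF i] by metis
qed

lemma cw_inj: "u \<in> ambient k \<Longrightarrow> w \<in> ambient k \<Longrightarrow> cw u = cw w \<Longrightarrow> u = w"
proof (rule ext)
  fix i assume u: "u \<in> ambient k" and w: "w \<in> ambient k" and eq: "cw u = cw w"
  show "u i = w i"
  proof (cases "i < k")
    case True
    then obtain p where "\<forall>x. cw x p = x i" using cw_coord[OF u] by blast
    then show ?thesis using eq by metis
  next
    case False
    then show ?thesis using u w by (simp add: ambient_def)
  qed
qed

lemma cw_expand: "u \<in> ambient k \<Longrightarrow> cw u = (\<Sum>i<k. vscale (u i) (cw (unitv i)))"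
proof (rule ext)
  fix p
  show "cw u p = (\<Sum>i<k. vscale (u i) (cw (unitv i))) p"
  proof (cases "p < n")
    case True
    have "(\<Sum>i<k. u i * dotp k (unitv i) (g (floor_log (Suc p)))) = (\<Sum>i<k. u i * g (floor_log (Suc p)) i)"
      by (rule sum.cong) (simp_all add: dotp_unit1)
    then have "cw u p = (\<Sum>i<k. u i * dotp k (unitv i) (g (floor_log (Suc p))))"
      using True by (simp add: cw_def dotp_def)
    then show ?thesis using True by (simp add: sum_fun_apply vscale_def cw_def)
  next
    case False
    then show ?thesis by (simp add: sum_fun_apply vscale_def cw_def)
  qed
qed

definition wt where "wt u = {j. j < N \<and> dotp k u (g j) \<noteq> 0}"

lemma hweight_cw: "hweight n (cw u) = (\<Sum>j\<in>wt u. 2^j)"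
proof -
  have "cw u = (\<lambda>p. if p < 2^N - 1 then (\<lambda>j. dotp k u (g j)) (floor_log (Suc p)) else 0)"
    by (simp add: cw_def n_def)
  then show ?thesis unfolding wt_def using hweight_blocks[of N "\<lambda>j. dotp k u (g j)"] by (simp add: n_def)
qed

lemma weq:
  assumes u: "u \<in> ambient k" "u \<noteq> 0" and w: "w \<in> ambient k" "w \<noteq> 0"
  shows "hweight n (cw w) = hweight n (cw u) \<longleftrightarrow> (\<exists>a. a \<noteq> 0 \<and> w = vscale a u)"
proof
  assume "hweight n (cw w) = hweight n (cw u)"
  then have "wt w = wt u" unfolding hweight_cw
    by (rule sum_binary_inj[rotated 2]) (auto simp: wt_def)
  then have e: "dotp k u v = 0 \<longleftrightarrow> dotp k w v = 0" if vA: "v \<in> ambient k" for v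
  proof (cases "v = 0")
    case True then show ?thesis by (simp add: dotp_zero2)
  next
    case False
    then obtain j where "j < N" "g j = v" using g_surj vA by blast
    then show ?thesis using \<open>wt w = wt u\<close> unfolding wt_def by blast
  qed
  obtain a where a: "w = vscale a u" using proportional[OF u w(1) e] by blast
  then have "a \<noteq> 0" using w(2) by (auto simp: vscale_def fun_eq_iff)
  then show "\<exists>a. a \<noteq> 0 \<and> w = vscale a u" using a by blast
next
  assume "\<exists>a. a \<noteq> 0 \<and> w = vscale a u"
  then obtain a where a: "a \<noteq> 0" "w = vscale a u" by blast
  then have "wt w = wt u" by (simp add: wt_def dotp_scale1)
  then show "hweight n (cw w) = hweight n (cw u)" by (simp add: hweight_cw)
qed

lemma ambient_add: "(u::nat \<Rightarrow> 'a) \<in> ambient m \<Longrightarrow> w \<in> ambient m \<Longrightarrow> u + w \<in> ambient m"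
  by (simp add: ambient_def)

lemma ambient_scale: "(u::nat \<Rightarrow> 'a) \<in> ambient m \<Longrightarrow> vscale a u \<in> ambient m"
  by (simp add: ambient_def vscale_def)

lemma ambient_zero: "(0::nat \<Rightarrow> 'a) \<in> ambient m"
  by (simp add: ambient_def)

lemma C_ambient: "C \<subseteq> ambient n"
  by (auto simp: C_def cw_def ambient_def)

lemma C_subspace: "module.subspace vscale C"
proof -
  interpret vs: vector_space "vscale :: 'a \<Rightarrow> (nat \<Rightarrow> 'a) \<Rightarrow> _" by (rule vs)
  show ?thesis unfolding vs.subspace_def C_def
  proof (intro conjI ballI allI)
    show "0 \<in> cw ` ambient k" using cw_zero ambient_zero by (metis image_eqI)
  next
    fix x y assume "x \<in> cw ` ambient k" "y \<in> cw ` ambient k"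
    then obtain u w where "u \<in> ambient k" "w \<in> ambient k" "x = cw u" "y = cw w" by blast
    then show "x + y \<in> cw ` ambient k" using cw_add ambient_add by (metis image_eqI)
  next
    fix c x assume "x \<in> cw ` ambient k"
    then obtain u where "u \<in> ambient k" "x = cw u" by blast
    then show "vscale c x \<in> cw ` ambient k" using cw_scale ambient_scale by (metis image_eqI)
  qed
qed

lemma C_dim: "vector_space.dim vscale C = k"
proof -
  interpret vs: vector_space "vscale :: 'a \<Rightarrow> (nat \<Rightarrow> 'a) \<Rightarrow> _" by (rule vs)
  let ?b = "\<lambda>i. cw (unitv i)"
  let ?B = "?b ` {..<k}"
  have injb: "inj_on ?b {..<k}"
  proof (rule inj_onI)
    fix i j assume ij: "i \<in> {..<k}" "j \<in> {..<k}" "?b i = ?b j"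
    then have "unitv i = (unitv j :: nat \<Rightarrow> 'a)" using cw_inj unitv_ambient by auto
    then show "i = j" by (auto simp: unitv_def fun_eq_iff split: if_splits)
  qed
  have "vs.dim C = card ?B"
  proof (rule vs.dim_unique)
    show "?B \<subseteq> C" using unitv_ambient by (auto simp: C_def)
    show "C \<subseteq> vs.span ?B"
    proof
      fix x assume "x \<in> C"
      then obtain u where u: "u \<in> ambient k" "x = cw u" by (auto simp: C_def)
      show "x \<in> vs.span ?B" unfolding u(2) cw_expand[OF u(1)]
        by (intro vs.span_sum vs.span_scale vs.span_base) auto
    qed
    show "vs.independent ?B"
    proof (rule vs.independent_if_scalars_zero)
      show "finite ?B" by simp
    next
      fix f x assume sum0: "(\<Sum>x\<in>?B. vscale (f x) x) = 0" and x: "x \<in> ?B"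
      define u where "u = (\<lambda>i. if i < k then f (?b i) else (0::'a))"
      have uA: "u \<in> ambient k" by (simp add: u_def ambient_def)
      have "cw u = (\<Sum>i<k. vscale (u i) (?b i))" by (rule cw_expand[OF uA])
      also have "\<dots> = (\<Sum>i<k. vscale (f (?b i)) (?b i))"
        by (rule sum.cong) (auto simp: u_def)
      also have "\<dots> = (\<Sum>x\<in>?B. vscale (f x) x)"
        by (simp add: sum.reindex[OF injb])
      also have "\<dots> = cw 0" using sum0 cw_zero by simp
      finally have "u = 0" using cw_inj uA ambient_zero by blast
      obtain i where i: "i < k" "x = ?b i" using x by blast
      have "u i = 0" using \<open>u = 0\<close> by simp
      then show "f x = 0" using i by (simp add: u_def)
    qed
  qed simp
  then show ?thesis using card_image[OF injb] by simp
qed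

lemma C_nondeg: "\<forall>i<n. \<exists>c\<in>C. c i \<noteq> 0"
proof (intro allI impI)
  fix p assume p: "p < n"
  have "floor_log (Suc p) < N" using fl_bound p by (simp add: n_def)
  then have "g (floor_log (Suc p)) \<in> ambient k" "g (floor_log (Suc p)) \<noteq> 0" using g_in by auto
  then obtain i where i: "i < k" "g (floor_log (Suc p)) i \<noteq> 0" using ambient_nz by blast
  have "cw (unitv i) p \<noteq> 0" using p i by (simp add: cw_def dotp_unit1)
  moreover have "cw (unitv i) \<in> C" unfolding C_def using unitv_ambient[OF i(1)] by (rule imageI)
  ultimately show "\<exists>c\<in>C. c p \<noteq> 0" by blast
qed

lemma fiber_card:
  assumes u0: "u0 \<in> ambient k" "u0 \<noteq> 0"
  shows "card {u \<in> ambient k - {0}. hweight n (cw u) = hweight n (cw u0)} = card (UNIV :: 'a set) - 1"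
proof -
  have eq: "{u \<in> ambient k - {0}. hweight n (cw u) = hweight n (cw u0)} = (\<lambda>a. vscale a u0) ` (UNIV - {0})"
  proof (intro set_eqI iffI)
    fix u assume "u \<in> {u \<in> ambient k - {0}. hweight n (cw u) = hweight n (cw u0)}"
    then have "u \<in> ambient k" "u \<noteq> 0" "hweight n (cw u) = hweight n (cw u0)" by auto
    then obtain a where "a \<noteq> 0" "u = vscale a u0" using weq[OF u0] by blast
    then show "u \<in> (\<lambda>a. vscale a u0) ` (UNIV - {0})" by blast
  next
    fix u assume "u \<in> (\<lambda>a. vscale a u0) ` (UNIV - {0})"
    then obtain a where a: "a \<noteq> 0" "u = vscale a u0" by blast
    have uA: "u \<in> ambient k" using a ambient_scale u0 by simp
    obtain i where i: "i < k" "u0 i \<noteq> 0" using ambient_nz u0 by blast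
    have "u i \<noteq> 0" using a i by (simp add: vscale_def)
    then have "u \<noteq> 0" by auto
    moreover have "hweight n (cw u) = hweight n (cw u0)" using weq[OF u0 uA \<open>u \<noteq> 0\<close>] a by blast
    ultimately show "u \<in> {u \<in> ambient k - {0}. hweight n (cw u) = hweight n (cw u0)}" using uA by blast
  qed
  have inj: "inj_on (\<lambda>a. vscale a u0) (UNIV - {0})"
  proof (rule inj_onI)
    fix a b assume "vscale a u0 = vscale b u0"
    moreover obtain i where i: "i < k" "u0 i \<noteq> 0" using ambient_nz u0 by blast
    ultimately have "a * u0 i = b * u0 i" by (metis vscale_def)
    then show "a = b" using i by simp
  qed
  show ?thesis unfolding eq card_image[OF inj] by (simp add: card_Diff_singleton)
qed

lemma weights_card:
  "card (weight_set n C) * (card (UNIV :: 'a set) - 1) = card (UNIV :: 'a set) ^ k - 1"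
proof -
  let ?A = "ambient k - {0::nat \<Rightarrow> 'a}"
  let ?f = "\<lambda>u. hweight n (cw u)"
  have cw0: "cw u \<noteq> 0" if "u \<in> ?A" for u
    using that cw_inj[OF _ ambient_zero] cw_zero by auto
  have "C - {0} = cw ` ?A"
    using cw0 cw_zero by (auto simp: C_def)
  then have ws: "weight_set n C = ?f ` ?A" by (simp add: weight_set_def image_image)
  have finA: "finite ?A" using card_ambient by auto
  have "card ?A = (\<Sum>y\<in>?f ` ?A. card {u \<in> ?A. ?f u = y})"
    unfolding card_eq_sum using sum.image_gen[OF finA, of "\<lambda>_. 1::nat" ?f] by simp
  also have "\<dots> = (\<Sum>y\<in>?f ` ?A. card (UNIV :: 'a set) - 1)"
  proof (rule sum.cong[OF refl])
    fix y assume "y \<in> ?f ` ?A"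
    then obtain u0 where "u0 \<in> ?A" "y = ?f u0" by blast
    then show "card {u \<in> ?A. ?f u = y} = card (UNIV :: 'a set) - 1" using fiber_card by auto
  qed
  also have "\<dots> = card (weight_set n C) * (card (UNIV :: 'a set) - 1)" by (simp add: ws)
  finally have "card ?A = card (weight_set n C) * (card (UNIV :: 'a set) - 1)" .
  moreover have "card ?A = card (UNIV :: 'a set) ^ k - 1"
  proof -
    have "finite (ambient k :: (nat \<Rightarrow> 'a) set)" "card (ambient k :: (nat \<Rightarrow> 'a) set) = card (UNIV::'a set)^k"
      using card_ambient by blast+
    then show ?thesis using ambient_zero by (simp add: card_Diff_singleton)
  qed
  ultimately show ?thesis by simp
qed

end

theorem mainTheorem2:
  assumes "card (UNIV :: ('a::{field,finite}) set) \<ge> 3" and "k \<ge> 1"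
  shows "\<exists>n::nat. n > 0 \<and> (\<exists>C :: (nat \<Rightarrow> 'a) set. is_MWS n k C)"
proof -
  let ?q = "card (UNIV :: 'a set)"
  let ?A = "ambient k - {0::nat \<Rightarrow> 'a}"
  have fA: "finite (ambient k :: (nat \<Rightarrow> 'a) set)" "card (ambient k :: (nat \<Rightarrow> 'a) set) = ?q^k"
    using card_ambient by blast+
  have finA: "finite ?A" using fA by simp
  have z: "(0::nat \<Rightarrow> 'a) \<in> ambient k" by (simp add: ambient_def)
  have cardA: "card ?A = ?q^k - 1" using fA z by (simp add: card_Diff_singleton)
  obtain g where g: "bij_betw g {0..<card ?A} ?A" using ex_bij_betw_nat_finite[OF finA] by blast
  interpret M: mws k "card ?A" g
    by unfold_locales (use g in \<open>simp add: atLeast0LessThan\<close>)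
  have "?q ^ 1 \<le> ?q ^ k" using assms by (intro power_increasing) auto
  then have "3 \<le> ?q ^ k" using assms(1) by simp
  then have N2: "2 \<le> card ?A" using cardA by simp
  have "(2::nat) ^ 2 \<le> 2 ^ card ?A" using N2 by (intro power_increasing) auto
  then have npos: "M.n > 0" by (simp add: M.n_def)
  have q1: "?q - 1 > 0" using assms(1) by simp
  have W: "card (weight_set M.n M.C) = (?q^k - 1) div (?q - 1)"
    using M.weights_card q1 by (metis nonzero_mult_div_cancel_right less_numeral_extra(3))
  have th: "theta ?q (k - 1) = (?q^k - 1) div (?q - 1)"
    using assms(2) by (simp add: theta_def)
  have "is_MWS M.n k M.C"
    unfolding is_MWS_def is_code_def
    using M.C_ambient M.C_subspace M.C_dim M.C_nondeg W th by simp
  then show ?thesis using npos by blast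
qed

end
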